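(* Let $\mathcal{D}\subset\mathbb{R}^N$ be open, bounded, connected, let $F:\partial\mathcal{D}\to\mathbb{R}$ be continuous, and for $\epsilon\in(0,1)$ define $u^\epsilon:\mathcal{D}\to\mathbb{R}$ by $u^\epsilon(x_0)=\mathbb{E}[F\circ X^{\epsilon,x_0}]=\int_\Omega F\circ X^{\epsilon,x_0}\,d\mathbb{P}$. Then $u^\epsilon$ is continuous and satisfies $$u^\epsilon(x)=\frac{1}{|B_{\epsilon\wedge\operatorname{dist}(x,\partial\mathcal{D})}(x)|}\int_{B_{\epsilon\wedge\operatorname{dist}(x,\partial\mathcal{D})}(x)}u^\epsilon(y)\,dy\quad\text{for all }x\in\mathcal{D}.$$
   Context: Probability space: $\Omega_1=B_1(0)\subset\mathbb{R}^N$ with Borel $\sigma$-algebra and normalised Lebesgue measure $\mathbb{P}_1$; $(\Omega,\mathcal{F},\mathbb{P})$ is the countable product $\Omega=(\Omega_1)^{\mathbb{N}}$, $\omega=\{w_i\}_{i\ge1}$, with $\mathcal{F}_n$ the $\sigma$-algebra generated by the first $n$ coordinates. The $\epsilon$-ball walk started at $x_0\in\mathcal{D}$: $X_0^{\epsilon,x_0}\equiv x_0$, $X_n^{\epsilon,x_0}=X_{n-1}^{\epsilon,x_0}+\big(\epsilon\wedge\operatorname{dist}(X_{n-1}^{\epsilon,x_0},\partial\mathcal{D})\big)w_n$ for $n\ge1$. This sequence converges $\mathbb{P}$-a.s. to a random variable $X^{\epsilon,x_0}:\Omega\to\partial\mathcal{D}$, and $X^{\epsilon,x_0}$ denotes this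 limit. *)

theory Defs
  imports "HOL-Probability.Probability"
begin

definition ball_prob :: "('a::euclidean_space) measure" where
  "ball_prob = uniform_measure lborel (ball 0 1)"

text \<open>The probability space Omega = (B_1(0))^N with the product measure;
  omega i is the coordinate w_(i+1).\<close>
definition Omega_prob :: "(nat \<Rightarrow> 'a::euclidean_space) measure" where
  "Omega_prob = PiM UNIV (\<lambda>_. ball_prob)"

fun ball_walk :: "'a::euclidean_space set \<Rightarrow> real \<Rightarrow> 'a \<Rightarrow> (nat \<Rightarrow> 'a) \<Rightarrow> nat \<Rightarrow> 'a" where
  "ball_walk D \<epsilon> x0 \<omega> 0 = x0"
| "ball_walk D \<epsilon> x0 \<omega> (Suc n) =
     ball_walk D \<epsilon> x0 \<omega> n
     + (min \<epsilon> (infdist (ball_walk D \<epsilon> x0 \<omega> n) (frontier D))) *\<^sub>R \<omega> n"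

text \<open>F o X^{eps,x0}: defined on the (full-measure) event where the walk converges to a
  boundary point; set to 0 on the complementary null event.\<close>
definition F_of_limit :: "'a::euclidean_space set \<Rightarrow> ('a \<Rightarrow> real) \<Rightarrow> real \<Rightarrow> 'a \<Rightarrow> (nat \<Rightarrow> 'a) \<Rightarrow> real" where
  "F_of_limit D F \<epsilon> x0 \<omega> =
     (if convergent (ball_walk D \<epsilon> x0 \<omega>) \<and> lim (ball_walk D \<epsilon> x0 \<omega>) \<in> frontier D
      then F (lim (ball_walk D \<epsilon> x0 \<omega>)) else 0)"

definition u_eps :: "'a::euclidean_space set \<Rightarrow> ('a \<Rightarrow> real) \<Rightarrow> real \<Rightarrow> 'a \<Rightarrow> real" where
  "u_eps D F \<epsilon> x0 = (\<integral>\<omega>. F_of_limit D F \<epsilon> x0 \<omega> \<partial>Omega_prob)"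

end

theory Submission
  imports Defs
begin

lemma ball_walk_shift:
  "ball_walk D e x (case_nat s w) (Suc n) =
   ball_walk D e (x + min e (infdist x (frontier D)) *\<^sub>R s) w n"
  by (induction n) simp_all

lemma F_of_limit_shift:
  "F_of_limit D F e x (case_nat s w) =
   F_of_limit D F e (x + min e (infdist x (frontier D)) *\<^sub>R s) w"
proof -
  let ?f = "ball_walk D e x (case_nat s w)"
  let ?g = "ball_walk D e (x + min e (infdist x (frontier D)) *\<^sub>R s) w"
  have fg: "(\<lambda>n. ?f (Suc n)) = ?g" using ball_walk_shift by blast
  have lim: "(?f \<longlonglongrightarrow> L) \<longleftrightarrow> (?g \<longlonglongrightarrow> L)" for L
    using filterlim_sequentially_Suc[of ?f "nhds L"] fg by simp
  have c: "convergent ?f \<longleftrightarrow> convergent ?g"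
    unfolding convergent_def using lim by simp
  have l: "lim ?f = lim ?g"
    unfolding lim_def using lim by simp
  show ?thesis unfolding F_of_limit_def c l ..
qed

lemma sets_ball_prob[simp, measurable_cong]: "sets (ball_prob :: 'a::euclidean_space measure) = sets borel"
  unfolding ball_prob_def by simp

lemma space_ball_prob[simp]: "space (ball_prob :: 'a::euclidean_space measure) = UNIV"
  unfolding ball_prob_def by simp

lemma prob_space_ball_prob: "prob_space (ball_prob :: 'a::euclidean_space measure)"
  unfolding ball_prob_def
proof (rule prob_space_uniform_measure)
  have "unit_ball_vol (real DIM('a)) > 0" by (rule unit_ball_vol_pos) simp
  then show "emeasure lborel (ball (0::'a) 1) \<noteq> 0" "emeasure lborel (ball (0::'a) 1) \<noteq> \<infinity>"
    by (auto simp: emeasure_ball simp del: unit_ball_vol_pos)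
qed

lemma prob_space_Omega: "prob_space (Omega_prob :: (nat \<Rightarrow> 'a::euclidean_space) measure)"
  unfolding Omega_prob_def
  using prob_space_ball_prob by (intro prob_space_PiM) auto

lemma comp_meas: "(\<lambda>w. w n) \<in> borel_measurable (Omega_prob :: (nat \<Rightarrow> 'a::euclidean_space) measure)"
proof -
  have "(\<lambda>w. w n) \<in> Omega_prob \<rightarrow>\<^sub>M (ball_prob :: 'a measure)"
    unfolding Omega_prob_def by (rule measurable_component_singleton) simp
  moreover have "(Omega_prob :: (nat \<Rightarrow> 'a) measure) \<rightarrow>\<^sub>M ball_prob = Omega_prob \<rightarrow>\<^sub>M (borel :: 'a measure)"
    by (rule measurable_cong_sets) simp_all
  ultimately show ?thesis by simp
qed

lemma walk_meas:
  "(\<lambda>(x, w). ball_walk D e x w n) \<in> borel_measurable (borel \<Otimes>\<^sub>M (Omega_prob :: (nat \<Rightarrow> 'a::euclidean_space) measure))"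
proof (induction n)
  case 0
  have "(\<lambda>(x, w). ball_walk D e x w 0) = (fst :: 'a \<times> (nat \<Rightarrow> 'a) \<Rightarrow> 'a)" by (auto simp: fun_eq_iff)
  then show ?case by simp
next
  case (Suc n)
  define W where "W = (\<lambda>(x, w). ball_walk D e x w n)"
  define Z where "Z = (\<lambda>p::'a \<times> (nat \<Rightarrow> 'a). snd p n)"
  define I where "I = (\<lambda>y::'a. min e (infdist y (frontier D)))"
  have W: "W \<in> borel_measurable (borel \<Otimes>\<^sub>M (Omega_prob :: (nat \<Rightarrow> 'a) measure))"
    unfolding W_def by (rule Suc)
  have I: "I \<in> borel_measurable borel"
    unfolding I_def by (intro borel_measurable_continuous_onI continuous_intros)
  have Z: "Z \<in> borel_measurable (borel \<Otimes>\<^sub>M (Omega_prob :: (nat \<Rightarrow> 'a) measure))"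
    unfolding Z_def by (rule measurable_compose[OF measurable_snd comp_meas])
  have IW: "(\<lambda>p. I (W p)) \<in> borel_measurable (borel \<Otimes>\<^sub>M (Omega_prob :: (nat \<Rightarrow> 'a) measure))"
    by (rule measurable_compose[OF W I])
  have "(\<lambda>p. W p + I (W p) *\<^sub>R Z p) \<in> borel_measurable (borel \<Otimes>\<^sub>M (Omega_prob :: (nat \<Rightarrow> 'a) measure))"
    by (intro borel_measurable_add borel_measurable_scaleR W IW Z)
  moreover have "(\<lambda>(x, w). ball_walk D e x w (Suc n)) = (\<lambda>p. W p + I (W p) *\<^sub>R Z p)"
    by (auto simp: fun_eq_iff W_def Z_def I_def)
  ultimately show ?case by simp
qed

lemma G_meas:
  assumes "continuous_on (frontier D) F"
  shows "(\<lambda>(x, w). F_of_limit D F e x w) \<in> borel_measurable (borel \<Otimes>\<^sub>M (Omega_prob :: (nat \<Rightarrow> 'a::euclidean_space) measure))"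
proof -
  let ?M = "borel \<Otimes>\<^sub>M (Omega_prob :: (nat \<Rightarrow> 'a) measure)"
  let ?F' = "\<lambda>y. if y \<in> frontier D then F y else 0"
  have F': "?F' \<in> borel_measurable borel"
    by (rule borel_measurable_continuous_on_if) (auto intro: assms continuous_on_const)
  define f where "f n = (\<lambda>(x, w). ball_walk D e x w n)" for n
  have f[measurable]: "f n \<in> borel_measurable ?M" for n unfolding f_def by (rule walk_meas)
  have eq: "(\<lambda>(x, w). F_of_limit D F e x w) = (\<lambda>p. if Cauchy (\<lambda>n. f n p) then ?F' (lim (\<lambda>n. f n p)) else 0)"
  proof (rule ext)
    fix p :: "'a \<times> (nat \<Rightarrow> 'a)"
    obtain x w where pxw: "p = (x, w)" by (cases p)
    show "(\<lambda>(x, w). F_of_limit D F e x w) p = (if Cauchy (\<lambda>n. f n p) then ?F' (lim (\<lambda>n. f n p)) else 0)"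
      unfolding pxw f_def F_of_limit_def Cauchy_convergent_iff by simp
  qed
  have p: "Measurable.pred ?M (\<lambda>p. Cauchy (\<lambda>n. f n p))"
    unfolding pred_def by (rule sets_Collect_Cauchy[OF f])
  have l: "(\<lambda>p. ?F' (lim (\<lambda>n. f n p))) \<in> borel_measurable ?M"
    by (rule measurable_compose[OF borel_measurable_lim_metric[OF f] F'])
  show ?thesis unfolding eq
    by (rule measurable_If[OF l borel_measurable_const p[unfolded pred_def]])
qed

lemma G_bound:
  assumes "continuous_on (frontier D) F" "bounded D"
  obtains M where "M \<ge> 0" "\<And>x w. \<bar>F_of_limit D F e x w\<bar> \<le> M"
proof -
  have "compact (F ` frontier D)"
    by (intro compact_continuous_image assms compact_frontier_bounded)
  then have "bounded (F ` frontier D)" by (rule compact_imp_bounded)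
  then obtain B where B0: "\<forall>z\<in>F ` frontier D. norm z \<le> B" unfolding bounded_iff by blast
  then have B: "\<And>y. y \<in> frontier D \<Longrightarrow> \<bar>F y\<bar> \<le> B" by auto
  show ?thesis
  proof (rule that[of "max B 0"])
    fix x w
    show "\<bar>F_of_limit D F e x w\<bar> \<le> max B 0"
      unfolding F_of_limit_def using B by (auto intro: max.coboundedI1)
  qed simp
qed

lemma u_bound:
  fixes D :: "'a::euclidean_space set" and x :: 'a and C :: real
  assumes "continuous_on (frontier D) F" "bounded D" "C \<ge> 0" "\<And>x w. \<bar>F_of_limit D F e x w\<bar> \<le> C"
  shows "\<bar>u_eps D F e x\<bar> \<le> C"
proof -
  interpret P: prob_space "Omega_prob :: (nat \<Rightarrow> 'a) measure" by (rule prob_space_Omega)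
  have m: "(\<lambda>w. F_of_limit D F e x w) \<in> borel_measurable (Omega_prob :: (nat \<Rightarrow> 'a) measure)"
    using measurable_Pair2[OF G_meas[OF assms(1)], of x] by simp
  have "\<bar>u_eps D F e x\<bar> \<le> (\<integral>w. C \<partial>(Omega_prob :: (nat \<Rightarrow> 'a) measure))"
    unfolding u_eps_def
    by (rule order_trans[OF integral_abs_bound integral_mono])
       (auto intro!: P.integrable_const_bound[where B=C] m assms(4) borel_measurable_abs)
  then show ?thesis by (simp add: P.prob_space)
qed

lemma u_meas:
  assumes "continuous_on (frontier D) F"
  shows "u_eps D F e \<in> borel_measurable (borel :: 'a::euclidean_space measure)"
proof -
  interpret P: prob_space "Omega_prob :: (nat \<Rightarrow> 'a) measure" by (rule prob_space_Omega)
  show ?thesis unfolding u_eps_def[abs_def]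
    using P.borel_measurable_lebesgue_integral[where f="\<lambda>x w. F_of_limit D F e x w" and N=borel, OF G_meas[OF assms]]
    by simp
qed


lemma mvp_prob:
  fixes D :: "'a::euclidean_space set"
  assumes cF: "continuous_on (frontier D) F" and bD: "bounded D"
  shows "u_eps D F e x = (\<integral>s. u_eps D F e (x + min e (infdist x (frontier D)) *\<^sub>R s) \<partial>ball_prob)"
proof -
  interpret B: prob_space "ball_prob :: 'a measure" by (rule prob_space_ball_prob)
  interpret S: sequence_space "ball_prob :: 'a measure" ..
  interpret P2: pair_prob_space "ball_prob :: 'a measure" S.S ..
  let ?r = "min e (infdist x (frontier D))"
  let ?G = "\<lambda>x w. F_of_limit D F e x w"
  obtain C where C: "C \<ge> 0" "\<And>x w. \<bar>?G x w\<bar> \<le> C" using G_bound[OF cF bD] by blast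
  have Om: "Omega_prob = S.S" unfolding Omega_prob_def ..
  have cn: "(\<lambda>(s, w). case_nat s w) \<in> ball_prob \<Otimes>\<^sub>M S.S \<rightarrow>\<^sub>M S.S"
    using measurable_case_nat'[OF measurable_fst measurable_snd] by (simp add: case_prod_beta')
  have Gx: "?G x \<in> borel_measurable S.S" using measurable_Pair2[OF G_meas[OF cF], of x] Om by simp
  have "u_eps D F e x = (\<integral>w. ?G x w \<partial>S.S)" unfolding u_eps_def Om ..
  also have "\<dots> = (\<integral>w. ?G x w \<partial>distr (ball_prob \<Otimes>\<^sub>M S.S) S.S (\<lambda>(s, w). case_nat s w))"
    by (simp add: S.PiM_iter)
  also have "\<dots> = (\<integral>p. ?G x (case_nat (fst p) (snd p)) \<partial>(ball_prob \<Otimes>\<^sub>M S.S))"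
    by (subst integral_distr[OF cn Gx]) (simp add: case_prod_beta')
  also have "\<dots> = (\<integral>p. ?G (x + ?r *\<^sub>R fst p) (snd p) \<partial>(ball_prob \<Otimes>\<^sub>M S.S))"
    by (simp add: F_of_limit_shift)
  also have "\<dots> = (\<integral>s. \<integral>w. ?G (x + ?r *\<^sub>R s) w \<partial>S.S \<partial>ball_prob)"
  proof -
    have mp: "(\<lambda>p. (x + ?r *\<^sub>R fst p, snd p)) \<in> (ball_prob \<Otimes>\<^sub>M S.S) \<rightarrow>\<^sub>M (borel \<Otimes>\<^sub>M Omega_prob)"
      unfolding Om by measurable
    have m: "(\<lambda>p. ?G (x + ?r *\<^sub>R fst p) (snd p)) \<in> borel_measurable (ball_prob \<Otimes>\<^sub>M S.S)"
      using measurable_compose[OF mp G_meas[OF cF]] by simp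
    have int: "integrable (ball_prob \<Otimes>\<^sub>M S.S) (\<lambda>p. ?G (x + ?r *\<^sub>R fst p) (snd p))"
      by (rule P2.integrable_const_bound[where B=C]) (auto intro: m C)
    show ?thesis using P2.integral_fst'[OF int] by simp
  qed
  also have "\<dots> = (\<integral>s. u_eps D F e (x + ?r *\<^sub>R s) \<partial>ball_prob)" unfolding u_eps_def Om ..
  finally show ?thesis .
qed


lemma measure_ball_eq: "r \<ge> 0 \<Longrightarrow> measure lborel (ball (c::'a::euclidean_space) r) = unit_ball_vol (DIM('a)) * r ^ DIM('a)"
  by (simp add: measure_def emeasure_ball)

lemma ball_prob_integral:
  fixes f :: "'a::euclidean_space \<Rightarrow> real"
  assumes f: "f \<in> borel_measurable borel"
  shows "(\<integral>s. f s \<partial>ball_prob) = (\<integral>s. indicator (ball 0 1) s * f s \<partial>lborel) / unit_ball_vol (DIM('a))"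
proof -
  let ?V = "unit_ball_vol (DIM('a))"
  have V: "?V > 0" by (rule unit_ball_vol_pos) simp
  have dv: "1 / ennreal ?V = ennreal (1 / ?V)" using V by (metis divide_ennreal ennreal_1 zero_le_one)
  have bp: "ball_prob = density lborel (\<lambda>s. ennreal (indicator (ball (0::'a) 1) s / ?V))"
    unfolding ball_prob_def uniform_measure_def
    using V by (intro density_cong) (auto simp: emeasure_ball dv indicator_def simp del: unit_ball_vol_pos)
  have "(\<integral>s. f s \<partial>ball_prob) = (\<integral>s. (indicator (ball (0::'a) 1) s / ?V) * f s \<partial>lborel)"
    unfolding bp using f V by (intro integral_real_density borel_measurable_divide borel_measurable_indicator) auto
  also have "\<dots> = (\<integral>s. indicator (ball 0 1) s * f s / ?V \<partial>lborel)" by simp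
  also have "\<dots> = (\<integral>s. indicator (ball 0 1) s * f s \<partial>lborel) / ?V" by (rule integral_divide_zero)
  finally show ?thesis .
qed

lemma ball_change_var:
  fixes f :: "'a::euclidean_space \<Rightarrow> real"
  assumes f: "f \<in> borel_measurable borel" and r: "r > 0"
  shows "(\<integral>y. indicator (ball x r) y * f y \<partial>lborel) = r ^ DIM('a) * (\<integral>s. indicator (ball 0 1) s * f (x + r *\<^sub>R s) \<partial>lborel)"
proof -
  have eq: "lborel = density (distr lborel borel (\<lambda>s. x + r *\<^sub>R s)) (\<lambda>_. \<bar>r\<bar>^DIM('a))"
    using r by (intro lborel_affine) simp
  have i: "indicator (ball x r) (x + r *\<^sub>R s) = (indicator (ball 0 1) s :: real)" for s
    using r by (auto simp: indicator_def dist_norm)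
  have g: "(\<lambda>y. indicator (ball x r) y * f y) \<in> borel_measurable borel" using f by (intro borel_measurable_times borel_measurable_indicator) auto
  have "(\<integral>y. indicator (ball x r) y * f y \<partial>lborel) = (\<integral>y. indicator (ball x r) y * f y \<partial>density (distr lborel borel (\<lambda>s. x + r *\<^sub>R s)) (\<lambda>_. \<bar>r\<bar>^DIM('a)))"
    by (rule arg_cong[where f="\<lambda>M. integral\<^sup>L M (\<lambda>y. indicator (ball x r) y * f y)", OF eq])
  also have "\<dots> = r ^ DIM('a) * (\<integral>s. indicator (ball 0 1) s * f (x + r *\<^sub>R s) \<partial>lborel)"
    using g r by (simp add: integral_density integral_distr i)
  finally show ?thesis .
qed


lemma rad_pos:
  fixes D :: "'a::euclidean_space set"
  assumes "open D" "bounded D" "x \<in> D" "e > 0"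
  shows "min e (infdist x (frontier D)) > 0"
proof -
  have "D \<noteq> UNIV" using assms(2) not_bounded_UNIV by auto
  then have "frontier D \<noteq> {}" using assms(3) frontier_eq_empty by auto
  moreover have "x \<notin> frontier D" using assms(1,3) by (simp add: frontier_def interior_open)
  ultimately have "infdist x (frontier D) > 0"
    by (intro infdist_pos_not_in_closed) auto
  then show ?thesis using assms(4) by simp
qed

lemma aux_frac:
  fixes V r a I L m :: real
  assumes "V > 0" "r > 0" "a = I / V" "L = r ^ n * I" "m = V * r ^ n"
  shows "a = L / m"
  using assms by (simp add: field_simps)

lemma mvp:
  fixes D :: "'a::euclidean_space set"
  assumes cF: "continuous_on (frontier D) F" and bD: "bounded D" and oD: "open D" and x: "x \<in> D" and e: "e > 0"
  shows "u_eps D F e x = (LINT y:ball x (min e (infdist x (frontier D)))|lborel. u_eps D F e y)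
          / measure lborel (ball x (min e (infdist x (frontier D))))"
proof -
  let ?r = "min e (infdist x (frontier D))"
  let ?u = "u_eps D F e"
  let ?V = "unit_ball_vol (DIM('a))"
  let ?I = "\<integral>s. indicator (ball 0 1) s * ?u (x + ?r *\<^sub>R s) \<partial>lborel"
  have r: "?r > 0" by (rule rad_pos[OF oD bD x e])
  have V: "?V > 0" by (rule unit_ball_vol_pos) simp
  have um: "?u \<in> borel_measurable borel" by (rule u_meas[OF cF])
  have aff: "(\<lambda>s::'a. x + ?r *\<^sub>R s) \<in> borel_measurable borel"
    by (intro borel_measurable_continuous_onI continuous_intros)
  have h: "(\<lambda>s. ?u (x + ?r *\<^sub>R s)) \<in> borel_measurable borel"
    using measurable_compose[OF aff um] by simp
  have A: "?u x = ?I / ?V"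
  proof -
    have "?u x = (\<integral>s. ?u (x + ?r *\<^sub>R s) \<partial>ball_prob)" by (rule mvp_prob[OF cF bD])
    also have "\<dots> = ?I / ?V" by (rule ball_prob_integral[OF h])
    finally show ?thesis .
  qed
  have B: "(LINT y:ball x ?r|lborel. ?u y) = ?r ^ DIM('a) * ?I"
    unfolding set_lebesgue_integral_def real_scaleR_def by (rule ball_change_var[OF um r])
  have C: "measure lborel (ball x ?r) = ?V * ?r ^ DIM('a)"
    using r by (intro measure_ball_eq) simp
  show ?thesis by (rule aux_frac[OF V r A B C])
qed


lemma N_cont:
  fixes D :: "'a::euclidean_space set"
  assumes cF: "continuous_on (frontier D) F" and bD: "bounded D" and e: "e > 0"
  shows "isCont (\<lambda>z. \<integral>y. indicator (ball z (min e (infdist z (frontier D)))) y * u_eps D F e y \<partial>lborel) x"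
proof -
  define rad where "rad z = min e (infdist z (frontier D))" for z
  let ?u = "u_eps D F e"
  obtain C where C: "C \<ge> 0" "\<And>x w. \<bar>F_of_limit D F e x w\<bar> \<le> C" using G_bound[OF cF bD] by blast
  have ub: "\<bar>?u y\<bar> \<le> C" for y by (rule u_bound[OF cF bD C])
  have um: "?u \<in> borel_measurable borel" by (rule u_meas[OF cF])
  have umb: "?u \<in> borel_measurable lborel" unfolding measurable_lborel2 by (rule um)
  have radc0: "isCont (\<lambda>z. min e (infdist z (frontier D))) z" for z by (intro continuous_intros)
  have radc: "isCont rad z" for z using radc0[of z] unfolding rad_def[abs_def] .
  have rad_le: "rad z \<le> e" for z unfolding rad_def by simp
  have sph: "sphere x (rad x) \<in> null_sets lborel"
    using negligible_sphere[of x "rad x"]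
    by (auto simp: null_sets_completion_iff negligible_iff_null_sets negligible_convex_frontier)
  have "(\<lambda>n. \<integral>y. indicator (ball (z n) (rad (z n))) y * ?u y \<partial>lborel)
          \<longlonglongrightarrow> (\<integral>y. indicator (ball x (rad x)) y * ?u y \<partial>lborel)" if z: "z \<longlonglongrightarrow> x" for z
  proof -
    obtain K where K: "K > 0" "\<And>n. norm (z n) \<le> K"
      using convergent_imp_Bseq[OF convergentI[OF z]] by (auto simp: Bseq_def)
    have w: "integrable lborel (\<lambda>y. C * indicator (ball (0::'a) (K + e)) y)"
      using K(1) e by (intro integrable_mult_right integrable_real_indicator) (auto simp: emeasure_ball)
    have rz: "(\<lambda>n. rad (z n)) \<longlonglongrightarrow> rad x" by (rule isCont_tendsto_compose[OF radc z])
    show ?thesis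
    proof (rule integral_dominated_convergence[OF _ _ w])
      show "(\<lambda>y. indicator (ball x (rad x)) y * ?u y) \<in> borel_measurable lborel"
        using umb by (intro borel_measurable_times borel_measurable_indicator) auto
      show "(\<lambda>y. indicator (ball (z n) (rad (z n))) y * ?u y) \<in> borel_measurable lborel" for n
        using umb by (intro borel_measurable_times borel_measurable_indicator) auto
      show "AE y in lborel. norm (indicator (ball (z n) (rad (z n))) y * ?u y) \<le> C * indicator (ball (0::'a) (K + e)) y" for n
      proof (rule AE_I2)
        fix y :: 'a
        show "norm (indicator (ball (z n) (rad (z n))) y * ?u y) \<le> C * indicator (ball (0::'a) (K + e)) y"
        proof (cases "y \<in> ball (z n) (rad (z n))")
          case True
          then have "norm y < K + e"
            using K(2)[of n] rad_le[of "z n"] norm_triangle_ineq[of "z n" "y - z n"]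
            by (auto simp: dist_norm norm_minus_commute)
          then show ?thesis using True ub[of y] by (simp add: indicator_def)
        qed (simp add: indicator_def C)
      qed
      show "AE y in lborel. (\<lambda>n. indicator (ball (z n) (rad (z n))) y * ?u y) \<longlonglongrightarrow> indicator (ball x (rad x)) y * ?u y"
        using AE_not_in[OF sph]
      proof (rule eventually_mono)
        fix y assume ys: "y \<notin> sphere x (rad x)"
        have d: "(\<lambda>n. dist (z n) y - rad (z n)) \<longlonglongrightarrow> dist x y - rad x"
          by (intro tendsto_intros z rz)
        show "(\<lambda>n. indicator (ball (z n) (rad (z n))) y * ?u y) \<longlonglongrightarrow> indicator (ball x (rad x)) y * ?u y"
        proof (cases "dist x y < rad x")
          case True
          then have "eventually (\<lambda>n. dist (z n) y - rad (z n) < 0) sequentially"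
            using order_tendstoD(2)[OF d, of 0] True by simp
          then have "eventually (\<lambda>n. indicator (ball (z n) (rad (z n))) y * ?u y = indicator (ball x (rad x)) y * ?u y) sequentially"
            by eventually_elim (use True in \<open>simp add: indicator_def\<close>)
          then show ?thesis by (rule tendsto_eventually)
        next
          case False
          then have "dist x y > rad x" using ys by (simp add: dist_commute)
          then have "eventually (\<lambda>n. dist (z n) y - rad (z n) > 0) sequentially"
            using order_tendstoD(1)[OF d, of 0] \<open>dist x y > rad x\<close> by simp
          then have "eventually (\<lambda>n. indicator (ball (z n) (rad (z n))) y * ?u y = indicator (ball x (rad x)) y * ?u y) sequentially"
            by eventually_elim (use False in \<open>simp add: indicator_def\<close>)
          then show ?thesis by (rule tendsto_eventually)
        qed
      qed
    qed
  qed
  then show ?thesis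
    unfolding rad_def[symmetric] by (simp add: continuous_at_sequentially comp_def)
qed


theorem theorem2p4:
  fixes D :: "'a::euclidean_space set" and F :: "'a \<Rightarrow> real" and \<epsilon> :: real
  assumes "open D" and "bounded D" and "connected D"
    and "continuous_on (frontier D) F"
    and "0 < \<epsilon>" and "\<epsilon> < 1"
  shows "continuous_on D (u_eps D F \<epsilon>)
    \<and> (\<forall>x\<in>D. u_eps D F \<epsilon> x =
          (LINT y:ball x (min \<epsilon> (infdist x (frontier D)))|lborel. u_eps D F \<epsilon> y)
          / measure lborel (ball x (min \<epsilon> (infdist x (frontier D)))))"
proof -
  let ?u = "u_eps D F \<epsilon>"
  define rad where "rad z = min \<epsilon> (infdist z (frontier D))" for z
  define v where "v z = (LINT y:ball z (rad z)|lborel. ?u y) / measure lborel (ball z (rad z))" for z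
  have M: "\<forall>x\<in>D. ?u x = (LINT y:ball x (min \<epsilon> (infdist x (frontier D)))|lborel. ?u y)
          / measure lborel (ball x (min \<epsilon> (infdist x (frontier D))))"
    by (intro ballI mvp[OF assms(4,2,1) _ assms(5)])
  have uv: "?u x = v x" if "x \<in> D" for x unfolding v_def rad_def by (rule bspec[OF M that])
  have v_eq: "v = (\<lambda>z. (\<integral>y. indicator (ball z (min \<epsilon> (infdist z (frontier D)))) y * ?u y \<partial>lborel)
       / (unit_ball_vol (DIM('a)) * min \<epsilon> (infdist z (frontier D)) ^ DIM('a)))"
  proof
    fix z
    have "rad z \<ge> 0" unfolding rad_def using assms(5) by (simp add: infdist_nonneg)
    then have m: "measure lborel (ball z (rad z)) = unit_ball_vol (DIM('a)) * rad z ^ DIM('a)"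
      by (rule measure_ball_eq)
    show "v z = (\<integral>y. indicator (ball z (min \<epsilon> (infdist z (frontier D)))) y * ?u y \<partial>lborel)
       / (unit_ball_vol (DIM('a)) * min \<epsilon> (infdist z (frontier D)) ^ DIM('a))"
      unfolding v_def set_lebesgue_integral_def m real_scaleR_def by (simp only: rad_def)
  qed
  have "isCont v x" if x: "x \<in> D" for x
  proof -
    have r: "min \<epsilon> (infdist x (frontier D)) > 0" by (rule rad_pos[OF assms(1,2) x assms(5)])
    have V: "unit_ball_vol (DIM('a)) > 0" by (rule unit_ball_vol_pos) simp
    have "unit_ball_vol (DIM('a)) * min \<epsilon> (infdist x (frontier D)) ^ DIM('a) \<noteq> 0"
    proof -
      have "unit_ball_vol (DIM('a)) * min \<epsilon> (infdist x (frontier D)) ^ DIM('a) > 0"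
        by (intro mult_pos_pos zero_less_power V r)
      then show ?thesis by linarith
    qed
    moreover have "isCont (\<lambda>z. unit_ball_vol (DIM('a)) * min \<epsilon> (infdist z (frontier D)) ^ DIM('a)) x"
      by (intro continuous_intros)
    moreover note N_cont[OF assms(4,2,5), of x]
    ultimately show ?thesis unfolding v_eq
      by (intro isCont_divide) auto
  qed
  then have "continuous_on D v" by (intro continuous_at_imp_continuous_on) auto
  moreover have "continuous_on D ?u = continuous_on D v" by (rule continuous_on_cong) (auto simp: uv)
  ultimately show ?thesis using M by (intro conjI) simp_all
qed

end
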